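(* Assume the inverse Jacobian $J=\frac{d\mathbb P}{d(\mathbb P\circ T)}$ has a version which is continuous on $\Omega_S$. Let $\omega\in\Omega_{\mathbb P}$ be a periodic point with minimal period $r\ge1$. Then $\lim_{n\to\infty}\beta_{\omega,n}$ exists and equals $\prod_{j=0}^{r-1}J(T^j\omega)$ (with $J$ the continuous version).
   Context: Let $\mathcal A$ be a finite or countable set with $|\mathcal A|>1$, $\Omega=\mathcal A^{\mathbb N}$ with the product of discrete topologies, $\mathcal F$ the σ-algebra generated by coordinate projections, $T$ the left shift, and $\mathbb P$ a $T$-invariant ψ-mixing probability measure (there is $\psi_m\to0$ with $|\mathbb P(E\cap T^{-(n+m)}F)-\mathbb P(E)\mathbb P(F)|\le\psi_m\mathbb P(E)\mathbb P(F)$ for all $m,n$, $E\in\mathcal F_{\{0,\dots,n-1\}}$, $F\in\mathcal F$). Let $S=(S_{a,b})_{a,b\in\mathcal A}$ be a $0$–$1$ matrix with no zero rows or columns, $\Omega_S=\{\omega:S_{\omega_j,\omega_{j+1}}=1\ \forall j\ge0\}$ with the subspace topology, $\mathcal F_S=\{E\in\mathcal F:E\subset\Omega_S\}$; assume $\mathbb P(\Omega_S)=1$ and $T:\Omega_S\to\Omega_S$ is topologically mixing. For $E\in\mathcal F_S$ define $\mathbb P\circ T(E)=\sum_{a\in\mathcal A}\mathbb P(T(E\cap[a]))$; this is a σ-finite measure on $(\Omega_S,\mathcal F_S)$ with $\mathbb P\ll\mathbb P\circ T$, and the inverse Jacobian is $J=\frac{d\mathbb P}{d(\mathbb P\circ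 T)}$. Cylinders $[a_0,\dots,a_{n-1}]=\{\omega:\omega_j=a_j,0\le j<n\}$, $A_n^\omega=[\omega_0,\dots,\omega_{n-1}]$, $\Omega_{\mathbb P}=\{\omega:\mathbb P(A_n^\omega)>0\ \forall n\}$; $\omega$ periodic with minimal period $r$ means $r=\min\{j\ge1:T^j\omega=\omega\}<\infty$; $\beta_{\omega,n}=\mathbb P(A^\omega_{n+r}\mid A^\omega_n)$. *)

theory Defs
  imports "HOL-Probability.Probability"
begin

definition shift :: "(nat \<Rightarrow> 'a) \<Rightarrow> (nat \<Rightarrow> 'a)" where
  "shift \<omega> = (\<lambda>n. \<omega> (Suc n))"

definition seq_space :: "(nat \<Rightarrow> 'a) measure" where
  "seq_space = PiM UNIV (\<lambda>_. count_space UNIV)"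

definition coord_sets :: "nat \<Rightarrow> (nat \<Rightarrow> 'a) set set" where
  "coord_sets n = sigma_sets UNIV {{\<omega>. \<omega> i \<in> B} | i B. i < n}"

definition cyl1 :: "'a \<Rightarrow> (nat \<Rightarrow> 'a) set" where
  "cyl1 a = {\<eta>. \<eta> 0 = a}"

definition cylA :: "nat \<Rightarrow> (nat \<Rightarrow> 'a) \<Rightarrow> (nat \<Rightarrow> 'a) set" where
  "cylA n \<omega> = {\<eta>. \<forall>j<n. \<eta> j = \<omega> j}"

definition psi_mixing :: "(nat \<Rightarrow> 'a) measure \<Rightarrow> bool" where
  "psi_mixing P \<longleftrightarrow> (\<exists>\<psi> :: nat \<Rightarrow> real. \<psi> \<longlonglongrightarrow> 0 \<and>
     (\<forall>m n E F. E \<in> coord_sets n \<longrightarrow> F \<in> sets P \<longrightarrow>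
        \<bar>measure P (E \<inter> (shift ^^ (n + m)) -` F) - measure P E * measure P F\<bar>
          \<le> \<psi> m * measure P E * measure P F))"

definition Omega_S :: "('a \<Rightarrow> 'a \<Rightarrow> bool) \<Rightarrow> (nat \<Rightarrow> 'a) set" where
  "Omega_S S = {\<omega>. \<forall>j. S (\<omega> j) (\<omega> (Suc j))}"

definition seq_topology :: "(nat \<Rightarrow> 'a) topology" where
  "seq_topology = product_topology (\<lambda>_. discrete_topology UNIV) UNIV"

definition topologically_mixing :: "'b topology \<Rightarrow> ('b \<Rightarrow> 'b) \<Rightarrow> bool" where
  "topologically_mixing X f \<longleftrightarrow>
     (\<forall>U V. openin X U \<longrightarrow> openin X V \<longrightarrow> U \<noteq> {} \<longrightarrow> V \<noteq> {} \<longrightarrow>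
        (\<exists>N. \<forall>n\<ge>N. {x \<in> topspace X. (f ^^ n) x \<in> U} \<inter> V \<noteq> {}))"

definition PT_measure :: "('a \<Rightarrow> 'a \<Rightarrow> bool) \<Rightarrow> (nat \<Rightarrow> 'a) measure \<Rightarrow> (nat \<Rightarrow> 'a) measure" where
  "PT_measure S P = measure_of (Omega_S S) {E \<in> sets P. E \<subseteq> Omega_S S}
     (\<lambda>E. \<integral>\<^sup>+ a. emeasure P (shift ` (E \<inter> cyl1 a)) \<partial>count_space UNIV)"

definition inv_jacobian_version ::
  "('a \<Rightarrow> 'a \<Rightarrow> bool) \<Rightarrow> (nat \<Rightarrow> 'a) measure \<Rightarrow> ((nat \<Rightarrow> 'a) \<Rightarrow> real) \<Rightarrow> bool" where
  "inv_jacobian_version S P J \<longleftrightarrow>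
     J \<in> borel_measurable (PT_measure S P) \<and> (\<forall>x\<in>Omega_S S. 0 \<le> J x) \<and>
     density (PT_measure S P) (\<lambda>x. ennreal (J x)) = restrict_space P (Omega_S S)"

definition Omega_P :: "(nat \<Rightarrow> 'a) measure \<Rightarrow> (nat \<Rightarrow> 'a) set" where
  "Omega_P P = {\<omega>. \<forall>n. measure P (cylA n \<omega>) > 0}"

definition min_period :: "('b \<Rightarrow> 'b) \<Rightarrow> 'b \<Rightarrow> nat \<Rightarrow> bool" where
  "min_period f x r \<longleftrightarrow> 1 \<le> r \<and> (f ^^ r) x = x \<and> (\<forall>j. 1 \<le> j \<and> j < r \<longrightarrow> (f ^^ j) x \<noteq> x)"

definition beta :: "(nat \<Rightarrow> 'a) measure \<Rightarrow> nat \<Rightarrow> (nat \<Rightarrow> 'a) \<Rightarrow> nat \<Rightarrow> real" where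
  "beta P r \<omega> n = measure P (cylA (n + r) \<omega> \<inter> cylA n \<omega>) / measure P (cylA n \<omega>)"

end

theory Submission
  imports Defs
begin

lemma space_seq: "space seq_space = UNIV"
  by (simp add: seq_space_def space_PiM)

lemma coord_meas: "{\<eta>::nat\<Rightarrow>'a. \<eta> j = c} \<in> sets seq_space"
proof -
  have "(\<lambda>\<eta>::nat\<Rightarrow>'a. \<eta> j) \<in> measurable seq_space (count_space UNIV)"
    unfolding seq_space_def by (rule measurable_component_singleton) simp
  from measurable_sets[OF this, of "{c}"] show ?thesis by (simp add: space_seq vimage_def)
qed

lemma cylA_Suc: "cylA (Suc n) \<omega> = cylA n \<omega> \<inter> {\<eta>. \<eta> n = \<omega> n}"
  by (auto simp: cylA_def less_Suc_eq)

lemma cylA_meas: "cylA n \<omega> \<in> sets seq_space"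
proof (induction n)
  case 0
  have "cylA 0 \<omega> = space seq_space" by (simp add: cylA_def space_seq)
  then show ?case by simp
next
  case (Suc n)
  then show ?case unfolding cylA_Suc by (intro sets.Int coord_meas)
qed

lemma cons_meas: "(\<lambda>\<eta>::nat\<Rightarrow>'a. case_nat a \<eta>) \<in> measurable seq_space seq_space"
  unfolding seq_space_def
proof (rule measurable_PiM_single')
  fix i :: nat
  show "(\<lambda>\<eta>::nat\<Rightarrow>'a. case_nat a \<eta> i) \<in> measurable (Pi\<^sub>M UNIV (\<lambda>_. count_space UNIV)) (count_space UNIV)"
    by (cases i) (auto intro: measurable_component_singleton)
qed (auto simp: space_PiM)

locale setting =
  fixes P :: "(nat \<Rightarrow> 'a) measure" and S :: "'a \<Rightarrow> 'a \<Rightarrow> bool" and J :: "(nat \<Rightarrow> 'a) \<Rightarrow> real"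
  assumes prob: "prob_space P" and sets_P: "sets P = sets seq_space"
    and full: "emeasure P (Omega_S S) = 1"
    and J_version: "inv_jacobian_version S P J"
    and J_cont: "continuous_map (subtopology seq_topology (Omega_S S)) euclideanreal J"
begin

lemma space_P: "space P = UNIV"
  using sets_eq_imp_space_eq[OF sets_P] space_seq by simp

lemma OS_meas: "Omega_S S \<in> sets P"
  using full emeasure_notin_sets by fastforce

lemma cylA_P: "cylA n \<omega> \<in> sets P"
  using sets_P cylA_meas by simp

lemma cons_P: "(\<lambda>\<eta>. case_nat a \<eta>) \<in> measurable P P"
  using measurable_cong_sets[OF sets_P sets_P] cons_meas by simp

lemma cons_vimage_P: "E \<in> sets P \<Longrightarrow> (\<lambda>\<eta>. case_nat a \<eta>) -` E \<in> sets P"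
  using measurable_sets[OF cons_P] space_P by fastforce

definition MS where "MS = {E \<in> sets P. E \<subseteq> Omega_S S}"
definition mu where "mu E = (\<integral>\<^sup>+ a. emeasure P (shift ` (E \<inter> cyl1 a)) \<partial>count_space UNIV)"

lemma shift_img: "shift ` (E \<inter> cyl1 a) = (\<lambda>\<eta>. case_nat a \<eta>) -` E"
proof (intro equalityI subsetI)
  fix x assume "x \<in> shift ` (E \<inter> cyl1 a)"
  then obtain \<xi> where x: "x = shift \<xi>" "\<xi> \<in> E" "\<xi> \<in> cyl1 a" by auto
  then have "\<xi> 0 = a" by (simp add: cyl1_def)
  have "case_nat a (shift \<xi>) n = \<xi> n" for n
    using \<open>\<xi> 0 = a\<close> by (cases n) (simp_all add: shift_def)
  then have "case_nat a (shift \<xi>) = \<xi>" by (simp add: fun_eq_iff)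
  with x show "x \<in> (\<lambda>\<eta>. case_nat a \<eta>) -` E" by simp
next
  fix \<eta> assume "\<eta> \<in> (\<lambda>\<eta>. case_nat a \<eta>) -` E"
  then have "case_nat a \<eta> \<in> E" by simp
  moreover have "shift (case_nat a \<eta>) = \<eta>" by (simp add: shift_def)
  moreover have "case_nat a \<eta> \<in> cyl1 a" by (simp add: cyl1_def)
  ultimately show "\<eta> \<in> shift ` (E \<inter> cyl1 a)" by (metis IntI image_eqI)
qed

lemma mu_alt: "mu E = (\<integral>\<^sup>+ a. emeasure P ((\<lambda>\<eta>. case_nat a \<eta>) -` E) \<partial>count_space UNIV)"
  unfolding mu_def shift_img ..

lemma MS_eq: "MS = sets (restrict_space P (Omega_S S))"
  using sets_restrict_space_iff[of "Omega_S S" P] OS_meas space_P by (auto simp: MS_def)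

lemma MS_sa: "sigma_algebra (Omega_S S) MS"
proof -
  have "sigma_algebra (space (restrict_space P (Omega_S S))) (sets (restrict_space P (Omega_S S)))"
    by (rule sets.sigma_algebra_axioms)
  then show ?thesis by (simp add: MS_eq space_restrict_space space_P)
qed

lemma mu_pos: "positive MS mu"
  by (simp add: positive_def mu_alt)

lemma mu_ca: "countably_additive MS mu"
  unfolding countably_additive_def
proof (intro allI impI)
  fix A :: "nat \<Rightarrow> (nat \<Rightarrow> 'a) set"
  assume A: "range A \<subseteq> MS" "disjoint_family A" "\<Union> (range A) \<in> MS"
  have AP: "A i \<in> sets P" for i using A(1) by (auto simp: MS_def)
  have "(\<Sum>i. mu (A i)) = (\<integral>\<^sup>+ a. (\<Sum>i. emeasure P ((\<lambda>\<eta>. case_nat a \<eta>) -` A i)) \<partial>count_space UNIV)"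
    unfolding mu_alt by (rule nn_integral_suminf[symmetric]) auto
  also have "\<dots> = (\<integral>\<^sup>+ a. emeasure P (\<Union>i. (\<lambda>\<eta>. case_nat a \<eta>) -` A i) \<partial>count_space UNIV)"
  proof (rule nn_integral_cong)
    fix a :: 'a
    show "(\<Sum>i. emeasure P ((\<lambda>\<eta>. case_nat a \<eta>) -` A i)) = emeasure P (\<Union>i. (\<lambda>\<eta>. case_nat a \<eta>) -` A i)"
    proof (rule suminf_emeasure)
      show "range (\<lambda>i. (\<lambda>\<eta>. case_nat a \<eta>) -` A i) \<subseteq> sets P" using AP cons_vimage_P by auto
      show "disjoint_family (\<lambda>i. (\<lambda>\<eta>. case_nat a \<eta>) -` A i)"
        using A(2) by (auto simp: disjoint_family_on_def)
    qed
  qed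
  also have "\<dots> = mu (\<Union> (range A))" unfolding mu_alt by (simp add: vimage_UN)
  finally show "(\<Sum>i. mu (A i)) = mu (\<Union> (range A))" .
qed

lemma PT_eq: "PT_measure S P = measure_of (Omega_S S) MS mu"
  unfolding PT_measure_def MS_def mu_def ..

lemma PT_sets: "sets (PT_measure S P) = MS"
  unfolding PT_eq using sigma_algebra.sets_measure_of_eq[OF MS_sa] .

lemma PT_space: "space (PT_measure S P) = Omega_S S"
  unfolding PT_eq by (rule space_measure_of_conv)

lemma PT_emeasure: "E \<in> MS \<Longrightarrow> emeasure (PT_measure S P) E = mu E"
  unfolding PT_eq by (rule emeasure_measure_of_sigma[OF MS_sa mu_pos mu_ca])

end



lemma Omega_S_cons: "case_nat a \<eta> \<in> Omega_S S \<longleftrightarrow> S a (\<eta> 0) \<and> \<eta> \<in> Omega_S S"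
proof
  assume h: "case_nat a \<eta> \<in> Omega_S S"
  then have "S (case_nat a \<eta> 0) (case_nat a \<eta> (Suc 0))" unfolding Omega_S_def by blast
  then have "S a (\<eta> 0)" by simp
  moreover have "S (\<eta> j) (\<eta> (Suc j))" for j
  proof -
    from h have "S (case_nat a \<eta> (Suc j)) (case_nat a \<eta> (Suc (Suc j)))" unfolding Omega_S_def by blast
    then show ?thesis by simp
  qed
  ultimately show "S a (\<eta> 0) \<and> \<eta> \<in> Omega_S S" by (simp add: Omega_S_def)
next
  assume h: "S a (\<eta> 0) \<and> \<eta> \<in> Omega_S S"
  have "S (case_nat a \<eta> j) (case_nat a \<eta> (Suc j))" for j
    using h by (cases j) (auto simp: Omega_S_def)
  then show "case_nat a \<eta> \<in> Omega_S S" by (simp add: Omega_S_def)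
qed

lemma cylA_cons: "case_nat a \<eta> \<in> cylA (Suc n) \<omega> \<longleftrightarrow> a = \<omega> 0 \<and> \<eta> \<in> cylA n (shift \<omega>)"
proof
  assume h: "case_nat a \<eta> \<in> cylA (Suc n) \<omega>"
  then have "case_nat a \<eta> 0 = \<omega> 0" unfolding cylA_def by blast
  then have "a = \<omega> 0" by simp
  moreover have "\<eta> j = \<omega> (Suc j)" if "j < n" for j
  proof -
    from h that have "case_nat a \<eta> (Suc j) = \<omega> (Suc j)" unfolding cylA_def by blast
    then show ?thesis by simp
  qed
  ultimately show "a = \<omega> 0 \<and> \<eta> \<in> cylA n (shift \<omega>)" by (simp add: cylA_def shift_def)
next
  assume h: "a = \<omega> 0 \<and> \<eta> \<in> cylA n (shift \<omega>)"
  have "case_nat a \<eta> j = \<omega> j" if "j < Suc n" for j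
    using h that by (cases j) (auto simp: cylA_def shift_def)
  then show "case_nat a \<eta> \<in> cylA (Suc n) \<omega>" by (simp add: cylA_def)
qed

lemma shift_OS: "\<omega> \<in> Omega_S S \<Longrightarrow> shift \<omega> \<in> Omega_S S"
  by (simp add: Omega_S_def shift_def)

lemma funpow_shift_OS: "\<omega> \<in> Omega_S S \<Longrightarrow> (shift ^^ j) \<omega> \<in> Omega_S S"
  by (induction j) (simp_all add: shift_OS)

context setting begin

lemma AE_OS: "AE x in P. x \<in> Omega_S S"
proof -
  interpret prob_space P by (rule prob)
  have "prob (Omega_S S) = 1" using full by (simp add: measure_def)
  then show ?thesis using prob_eq_1[OF OS_meas] by simp
qed

lemma emeasure_OS: "A \<in> sets P \<Longrightarrow> emeasure P (A \<inter> Omega_S S) = emeasure P A"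
  by (rule emeasure_eq_AE) (use AE_OS OS_meas in auto)

lemma measure_OS: "A \<in> sets P \<Longrightarrow> measure P (A \<inter> Omega_S S) = measure P A"
  by (simp add: measure_def emeasure_OS)

lemma E_MS: "cylA n \<omega> \<inter> Omega_S S \<in> MS"
  using cylA_P OS_meas by (auto simp: MS_def)

lemma PT_cyl:
  assumes w: "\<omega> \<in> Omega_S S" and n: "1 \<le> n"
  shows "emeasure (PT_measure S P) (cylA (Suc n) \<omega> \<inter> Omega_S S) = emeasure P (cylA n (shift \<omega>))"
proof -
  let ?c = "emeasure P (cylA n (shift \<omega>) \<inter> Omega_S S)"
  have pre: "emeasure P ((\<lambda>\<eta>. case_nat a \<eta>) -` (cylA (Suc n) \<omega> \<inter> Omega_S S)) = ?c * indicator {\<omega> 0} a" for a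
  proof (cases "a = \<omega> 0")
    case True
    have "(\<lambda>\<eta>. case_nat a \<eta>) -` (cylA (Suc n) \<omega> \<inter> Omega_S S) = cylA n (shift \<omega>) \<inter> Omega_S S"
    proof (intro equalityI subsetI)
      fix \<eta> assume "\<eta> \<in> cylA n (shift \<omega>) \<inter> Omega_S S"
      moreover have "S (\<omega> 0) (\<omega> 1)" using w unfolding Omega_S_def by simp
      moreover have "\<eta> 0 = \<omega> 1" using \<open>\<eta> \<in> cylA n (shift \<omega>) \<inter> Omega_S S\<close> n
        by (auto simp: cylA_def shift_def)
      ultimately show "\<eta> \<in> (\<lambda>\<eta>. case_nat a \<eta>) -` (cylA (Suc n) \<omega> \<inter> Omega_S S)"
        using True by (simp add: cylA_cons Omega_S_cons)
    qed (simp add: cylA_cons Omega_S_cons)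
    then show ?thesis using True by simp
  next
    case False
    then have "(\<lambda>\<eta>. case_nat a \<eta>) -` (cylA (Suc n) \<omega> \<inter> Omega_S S) = {}"
      by (auto simp: cylA_cons)
    then show ?thesis using False by simp
  qed
  have "emeasure (PT_measure S P) (cylA (Suc n) \<omega> \<inter> Omega_S S) = mu (cylA (Suc n) \<omega> \<inter> Omega_S S)"
    by (rule PT_emeasure[OF E_MS])
  also have "\<dots> = (\<integral>\<^sup>+ a. ?c * indicator {\<omega> 0} a \<partial>count_space UNIV)"
    unfolding mu_alt pre ..
  also have "\<dots> = ?c" by (subst nn_integral_cmult_indicator) auto
  also have "\<dots> = emeasure P (cylA n (shift \<omega>))" by (rule emeasure_OS[OF cylA_P])
  finally show ?thesis .
qed

lemma cont_cyl:
  assumes w: "\<omega> \<in> Omega_S S" and e: "0 < e"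
  shows "\<exists>N. \<forall>\<eta> \<in> Omega_S S. (\<forall>j<N. \<eta> j = \<omega> j) \<longrightarrow> \<bar>J \<eta> - J \<omega>\<bar> < e"
proof -
  have top: "topspace (subtopology seq_topology (Omega_S S)) = Omega_S S"
    by (simp add: seq_topology_def)
  have "openin (subtopology seq_topology (Omega_S S)) {x \<in> topspace (subtopology seq_topology (Omega_S S)). J x \<in> ball (J \<omega>) e}"
    by (rule openin_continuous_map_preimage[OF J_cont]) simp
  then have "openin (subtopology seq_topology (Omega_S S)) {x \<in> Omega_S S. J x \<in> ball (J \<omega>) e}"
    by (simp only: top)
  then obtain T where T: "openin seq_topology T" "{x \<in> Omega_S S. J x \<in> ball (J \<omega>) e} = T \<inter> Omega_S S"
    unfolding openin_subtopology by blast
  have "\<omega> \<in> {x \<in> Omega_S S. J x \<in> ball (J \<omega>) e}" using w e by simp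
  then have wT: "\<omega> \<in> T" using T(2) by blast
  have "openin (product_topology (\<lambda>_. discrete_topology UNIV) UNIV) T"
    using T(1) by (simp only: seq_topology_def)
  then have H: "\<forall>x\<in>T. \<exists>U. finite {i \<in> UNIV. U i \<noteq> topspace (discrete_topology UNIV)} \<and>
      (\<forall>i \<in> UNIV. openin (discrete_topology UNIV) (U i)) \<and> x \<in> Pi\<^sub>E UNIV U \<and> Pi\<^sub>E UNIV U \<subseteq> T"
    by (simp only: openin_product_topology_alt)
  obtain U where U: "finite {i \<in> UNIV. U i \<noteq> topspace (discrete_topology UNIV)}"
      "\<omega> \<in> Pi\<^sub>E UNIV U" "Pi\<^sub>E UNIV U \<subseteq> T"
    using bspec[OF H wT] by blast
  have "{i \<in> UNIV. U i \<noteq> topspace (discrete_topology UNIV)} = {i. U i \<noteq> UNIV}" by simp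
  with U(1) have "finite {i. U i \<noteq> UNIV}" by simp
  then obtain N where N: "{i. U i \<noteq> UNIV} \<subseteq> {..<N}" using finite_nat_iff_bounded by blast
  show ?thesis
  proof (intro exI ballI impI)
    fix \<eta> assume \<eta>: "\<eta> \<in> Omega_S S" "\<forall>j<N. \<eta> j = \<omega> j"
    have "\<eta> i \<in> U i" for i
    proof (cases "i < N")
      case True
      then have "\<eta> i = \<omega> i" using \<eta>(2) by blast
      moreover have "\<omega> i \<in> U i" using U(2) by (simp add: PiE_iff)
      ultimately show ?thesis by simp
    next
      case False
      then have "U i = UNIV" using N by blast
      then show ?thesis by simp
    qed
    then have "\<eta> \<in> Pi\<^sub>E UNIV U" by (simp add: PiE_iff)
    then have "\<eta> \<in> T" using U(3) by blast
    then have "\<eta> \<in> {x \<in> Omega_S S. J x \<in> ball (J \<omega>) e}" using T(2) \<eta>(1) by blast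
    then show "\<bar>J \<eta> - J \<omega>\<bar> < e" by (simp add: dist_real_def abs_minus_commute)
  qed
qed

lemma J_nonneg: "x \<in> Omega_S S \<Longrightarrow> 0 \<le> J x"
  using J_version by (simp add: inv_jacobian_version_def)

lemma J_meas: "(\<lambda>x. ennreal (J x)) \<in> borel_measurable (PT_measure S P)"
proof -
  have "J \<in> borel_measurable (PT_measure S P)"
    using J_version by (simp add: inv_jacobian_version_def)
  then show ?thesis by measurable
qed

lemma dens: "density (PT_measure S P) (\<lambda>x. ennreal (J x)) = restrict_space P (Omega_S S)"
  using J_version by (simp add: inv_jacobian_version_def)

lemma local_bound:
  assumes w: "\<omega> \<in> Omega_S S" and e: "0 < e"
  shows "\<exists>N. \<forall>n\<ge>N. (J \<omega> - e) * measure P (cylA n (shift \<omega>)) \<le> measure P (cylA (Suc n) \<omega>)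
      \<and> measure P (cylA (Suc n) \<omega>) \<le> (J \<omega> + e) * measure P (cylA n (shift \<omega>))"
proof -
  interpret prob_space P by (rule prob)
  obtain N0 where N0: "\<forall>\<eta> \<in> Omega_S S. (\<forall>j<N0. \<eta> j = \<omega> j) \<longrightarrow> \<bar>J \<eta> - J \<omega>\<bar> < e"
    using cont_cyl[OF w e] by blast
  show ?thesis
  proof (intro exI allI impI)
    fix n assume n: "Suc N0 \<le> n"
    define E where "E = cylA (Suc n) \<omega> \<inter> Omega_S S"
    define pS where "pS = measure P (cylA (Suc n) \<omega>)"
    define qn where "qn = measure P (cylA n (shift \<omega>))"
    have EPT: "E \<in> sets (PT_measure S P)" unfolding E_def PT_sets by (rule E_MS)
    have close: "\<bar>J x - J \<omega>\<bar> < e" if "x \<in> E" for x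
    proof -
      have "x \<in> Omega_S S" "\<forall>j<Suc n. x j = \<omega> j" using that by (auto simp: E_def cylA_def)
      then show ?thesis using N0 n by auto
    qed
    have "emeasure P (cylA (Suc n) \<omega>) = emeasure P E"
      unfolding E_def by (rule emeasure_OS[OF cylA_P, symmetric])
    also have "\<dots> = emeasure (restrict_space P (Omega_S S)) E"
      by (rule emeasure_restrict_space[symmetric]) (auto simp: E_def space_P OS_meas)
    also have "\<dots> = emeasure (density (PT_measure S P) (\<lambda>x. ennreal (J x))) E"
      by (simp add: dens)
    also have "\<dots> = (\<integral>\<^sup>+ x. ennreal (J x) * indicator E x \<partial>PT_measure S P)"
      by (rule emeasure_density[OF J_meas EPT])
    finally have I: "ennreal pS = (\<integral>\<^sup>+ x. ennreal (J x) * indicator E x \<partial>PT_measure S P)"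
      by (simp add: pS_def emeasure_eq_measure)
    have q: "emeasure (PT_measure S P) E = ennreal qn"
      unfolding E_def qn_def using PT_cyl[OF w, of n] n by (simp add: emeasure_eq_measure)
    have "(\<integral>\<^sup>+ x. ennreal (J x) * indicator E x \<partial>PT_measure S P)
        \<le> (\<integral>\<^sup>+ x. ennreal (J \<omega> + e) * indicator E x \<partial>PT_measure S P)"
    proof (rule nn_integral_mono)
      fix x show "ennreal (J x) * indicator E x \<le> ennreal (J \<omega> + e) * indicator E x"
        using close[of x] by (cases "x \<in> E") (auto intro!: ennreal_leI)
    qed
    also have "\<dots> = ennreal (J \<omega> + e) * ennreal qn"
      by (simp add: nn_integral_cmult_indicator[OF EPT] q)
    also have "\<dots> = ennreal ((J \<omega> + e) * qn)"
      by (rule ennreal_mult''[symmetric]) (simp add: qn_def)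
    finally have up: "ennreal pS \<le> ennreal ((J \<omega> + e) * qn)" using I by simp
    have "ennreal ((J \<omega> - e) * qn) = ennreal (J \<omega> - e) * ennreal qn"
      by (rule ennreal_mult'') (simp add: qn_def)
    also have "\<dots> = (\<integral>\<^sup>+ x. ennreal (J \<omega> - e) * indicator E x \<partial>PT_measure S P)"
      by (simp add: nn_integral_cmult_indicator[OF EPT] q)
    also have "\<dots> \<le> (\<integral>\<^sup>+ x. ennreal (J x) * indicator E x \<partial>PT_measure S P)"
    proof (rule nn_integral_mono)
      fix x show "ennreal (J \<omega> - e) * indicator E x \<le> ennreal (J x) * indicator E x"
        using close[of x] by (cases "x \<in> E") (auto intro!: ennreal_leI)
    qed
    finally have lo: "ennreal ((J \<omega> - e) * qn) \<le> ennreal pS" using I by simp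
    have "0 \<le> J \<omega>" by (rule J_nonneg[OF w])
    then have "0 \<le> (J \<omega> + e) * qn" using e by (simp add: qn_def)
    then have "pS \<le> (J \<omega> + e) * qn" using up ennreal_le_iff by blast
    moreover have "(J \<omega> - e) * qn \<le> pS" using lo ennreal_le_iff[of pS] by (simp add: pS_def)
    ultimately show "(J \<omega> - e) * measure P (cylA n (shift \<omega>)) \<le> measure P (cylA (Suc n) \<omega>)
      \<and> measure P (cylA (Suc n) \<omega>) \<le> (J \<omega> + e) * measure P (cylA n (shift \<omega>))"
      by (simp add: pS_def qn_def)
  qed
qed

lemma cylA_mono: "m \<le> n \<Longrightarrow> cylA n \<omega> \<subseteq> cylA m \<omega>"
  by (auto simp: cylA_def)

lemma main:
  assumes w: "\<omega> \<in> Omega_S S" and pos0: "\<And>n. 0 < measure P (cylA n \<omega>)"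
    and per: "(shift ^^ r) \<omega> = \<omega>"
  shows "(\<lambda>n. beta P r \<omega> n) \<longlonglongrightarrow> (\<Prod>j<r. J ((shift ^^ j) \<omega>))"
proof -
  interpret prob_space P by (rule prob)
  define p where "p j m = measure P (cylA m ((shift ^^ j) \<omega>))" for j m
  define \<rho> where "\<rho> j m = p j (Suc m) / p (Suc j) m" for j m
  have wj: "(shift ^^ j) \<omega> \<in> Omega_S S" for j by (rule funpow_shift_OS[OF w])
  have sh: "shift ((shift ^^ j) \<omega>) = (shift ^^ Suc j) \<omega>" for j by simp
  have pnn: "0 \<le> p j m" for j m by (simp add: p_def)
  have pos: "0 < p j m" for j m
  proof (induction j arbitrary: m)
    case 0 then show ?case using pos0 by (simp add: p_def)
  next
    case (Suc j)
    obtain N where N: "\<forall>n\<ge>N. (J ((shift ^^ j) \<omega>) - 1) * p (Suc j) n \<le> p j (Suc n)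
      \<and> p j (Suc n) \<le> (J ((shift ^^ j) \<omega>) + 1) * p (Suc j) n"
      using local_bound[OF wj, of 1 j] unfolding p_def sh by auto
    define M where "M = max m N"
    have "p j (Suc M) \<le> (J ((shift ^^ j) \<omega>) + 1) * p (Suc j) M" using N by (simp add: M_def)
    moreover have "0 < p j (Suc M)" by (rule Suc.IH)
    moreover have "0 \<le> J ((shift ^^ j) \<omega>)" by (rule J_nonneg[OF wj])
    ultimately have "0 < p (Suc j) M"
      using pnn[of "Suc j" M] by (smt (verit) mult_nonneg_nonpos)
    also have "p (Suc j) M \<le> p (Suc j) m"
      unfolding p_def by (rule finite_measure_mono[OF cylA_mono cylA_P]) (simp add: M_def)
    finally show ?case .
  qed
  have rho_lim: "(\<lambda>m. \<rho> j m) \<longlonglongrightarrow> J ((shift ^^ j) \<omega>)" for j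
  proof (rule LIMSEQ_I)
    fix r :: real assume r: "0 < r"
    obtain N where N: "\<forall>n\<ge>N. (J ((shift ^^ j) \<omega>) - r/2) * p (Suc j) n \<le> p j (Suc n)
      \<and> p j (Suc n) \<le> (J ((shift ^^ j) \<omega>) + r/2) * p (Suc j) n"
      using local_bound[OF wj, of "r/2" j] r unfolding p_def sh by auto
    show "\<exists>no. \<forall>n\<ge>no. norm (\<rho> j n - J ((shift ^^ j) \<omega>)) < r"
    proof (intro exI allI impI)
      fix n assume "N \<le> n"
      then have b: "(J ((shift ^^ j) \<omega>) - r/2) * p (Suc j) n \<le> p j (Suc n)"
        "p j (Suc n) \<le> (J ((shift ^^ j) \<omega>) + r/2) * p (Suc j) n" using N by auto
      have q: "0 < p (Suc j) n" by (rule pos)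
      have "J ((shift ^^ j) \<omega>) - r/2 \<le> \<rho> j n" unfolding \<rho>_def using b(1) q by (simp add: le_divide_eq)
      moreover have "\<rho> j n \<le> J ((shift ^^ j) \<omega>) + r/2" unfolding \<rho>_def using b(2) q by (simp add: divide_le_eq)
      ultimately show "norm (\<rho> j n - J ((shift ^^ j) \<omega>)) < r" using r by simp
    qed
  qed
  have tele: "\<forall>n. p 0 (n + k) = (\<Prod>j<k. \<rho> j (n + (k - 1 - j))) * p k n" for k
  proof (induction k)
    case 0 then show ?case by simp
  next
    case (Suc k)
    show ?case
    proof
      fix n
      have "p 0 (n + Suc k) = p 0 (Suc n + k)" by simp
      also have "\<dots> = (\<Prod>j<k. \<rho> j (Suc n + (k - 1 - j))) * p k (Suc n)" using Suc.IH by blast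
      also have "p k (Suc n) = \<rho> k n * p (Suc k) n"
        unfolding \<rho>_def using pos[of "Suc k" n] by simp
      also have "(\<Prod>j<k. \<rho> j (Suc n + (k - 1 - j))) = (\<Prod>j<k. \<rho> j (n + (Suc k - 1 - j)))"
      proof (rule prod.cong)
        fix j assume "j \<in> {..<k}"
        then have "Suc n + (k - 1 - j) = n + (Suc k - 1 - j)" by auto
        then show "\<rho> j (Suc n + (k - 1 - j)) = \<rho> j (n + (Suc k - 1 - j))" by (rule arg_cong[where f="\<rho> j"])
      qed simp
      finally show "p 0 (n + Suc k) = (\<Prod>j<Suc k. \<rho> j (n + (Suc k - 1 - j))) * p (Suc k) n"
        by (simp add: prod.lessThan_Suc mult.assoc)
    qed
  qed
  have beta_eq: "beta P r \<omega> n = (\<Prod>j<r. \<rho> j (n + (r - 1 - j)))" for n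
  proof -
    have "cylA (n + r) \<omega> \<inter> cylA n \<omega> = cylA (n + r) \<omega>" using cylA_mono[of n "n + r"] by auto
    then have "beta P r \<omega> n = p 0 (n + r) / p 0 n" by (simp add: beta_def p_def)
    also have "\<dots> = (\<Prod>j<r. \<rho> j (n + (r - 1 - j))) * p r n / p 0 n" using tele[of r] by simp
    also have "p r n = p 0 n" by (simp add: p_def per)
    finally show ?thesis using pos[of 0 n] by simp
  qed
  have "(\<lambda>n. \<Prod>j<r. \<rho> j (n + (r - 1 - j))) \<longlonglongrightarrow> (\<Prod>j<r. J ((shift ^^ j) \<omega>))"
    by (rule tendsto_prod) (rule LIMSEQ_ignore_initial_segment[OF rho_lim])
  then show ?thesis unfolding beta_eq .
qed

end

theorem theorem3:
  fixes P :: "(nat \<Rightarrow> 'a) measure" and S :: "'a \<Rightarrow> 'a \<Rightarrow> bool"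
    and J :: "(nat \<Rightarrow> 'a) \<Rightarrow> real" and \<omega> :: "nat \<Rightarrow> 'a" and r :: nat
  assumes alphabet: "countable (UNIV :: 'a set)" "\<exists>a b :: 'a. a \<noteq> b"
    and prob: "prob_space P" and sets_P: "sets P = sets seq_space"
    and invariant: "\<forall>E \<in> sets P. emeasure P (shift -` E) = emeasure P E"
    and mixing: "psi_mixing P"
    and S_rows: "\<forall>a. \<exists>b. S a b" and S_cols: "\<forall>b. \<exists>a. S a b"
    and full: "emeasure P (Omega_S S) = 1"
    and top_mix: "topologically_mixing (subtopology seq_topology (Omega_S S)) shift"
    and J_version: "inv_jacobian_version S P J"
    and J_cont: "continuous_map (subtopology seq_topology (Omega_S S)) euclideanreal J"
    and \<omega>_P: "\<omega> \<in> Omega_P P"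
    and period: "min_period shift \<omega> r"
  shows "(\<lambda>n. beta P r \<omega> n) \<longlonglongrightarrow> (\<Prod>j<r. J ((shift ^^ j) \<omega>))"
proof -
  interpret setting P S J using prob sets_P full J_version J_cont by (simp add: setting_def)
  have pos0: "\<And>n. 0 < measure P (cylA n \<omega>)" using \<omega>_P by (simp add: Omega_P_def)
  have w: "\<omega> \<in> Omega_S S"
  proof (rule ccontr)
    assume "\<omega> \<notin> Omega_S S"
    then obtain j where j: "\<not> S (\<omega> j) (\<omega> (Suc j))" by (auto simp: Omega_S_def)
    have "cylA (Suc (Suc j)) \<omega> \<inter> Omega_S S = {}"
    proof (rule ccontr)
      assume "cylA (Suc (Suc j)) \<omega> \<inter> Omega_S S \<noteq> {}"
      then obtain \<eta> where \<eta>: "\<eta> \<in> cylA (Suc (Suc j)) \<omega>" "\<eta> \<in> Omega_S S" by blast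
      from \<eta>(1) have "\<eta> j = \<omega> j" "\<eta> (Suc j) = \<omega> (Suc j)" by (simp_all add: cylA_def)
      moreover from \<eta>(2) have "S (\<eta> j) (\<eta> (Suc j))" by (simp add: Omega_S_def)
      ultimately show False using j by simp
    qed
    then have "measure P (cylA (Suc (Suc j)) \<omega>) = 0"
      using measure_OS[OF cylA_P, of "Suc (Suc j)" \<omega>] by simp
    with pos0[of "Suc (Suc j)"] show False by simp
  qed
  show ?thesis using main[OF w pos0] period by (simp add: min_period_def)
qed

end
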